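(* Let $\delta>0$, let $\ell<\ell'<r'<r$ be real numbers and let $g:[\ell,r]\to\mathbb{R}$ satisfy $|g(x)+\frac12x^2|\leq\frac14\delta^2$ for all $x\in[\ell,r]$. Let $h_1$ and $h_2$ be the concave majorants of $g$ on $[\ell,r]$ and on $[\ell',r']$ respectively. Then $h_1(x)=h_2(x)$ for all $x\in[\ell'+3\delta,r'-3\delta]$.
   Context: The concave majorant of $g$ on an interval $I$ is $h(x_0)=\inf\{ax_0+b: ax+b\geq g(x)\text{ for all }x\in I\}$ for $x_0\in I$. *)

theory Defs
  imports "HOL-Analysis.Analysis"
begin

definition concave_majorant :: "(real \<Rightarrow> real) \<Rightarrow> real set \<Rightarrow> real \<Rightarrow> real" where
  "concave_majorant g I x0 =
     Inf {a * x0 + b | a b. \<forall>x\<in>I. a * x + b \<ge> g x}"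

end

theory Submission
  imports Defs
begin

lemma key:
  fixes a b x0 x \<delta> l' r' :: real
  assumes d: "\<delta> > 0" and x0: "l' + 3*\<delta> \<le> x0" "x0 \<le> r' - 3*\<delta>"
    and dom: "\<forall>y\<in>{l'..r'}. a*y+b \<ge> -(y\<^sup>2/2) - \<delta>\<^sup>2/4"
    and at: "a*x0+b+x0\<^sup>2/2 \<le> \<delta>\<^sup>2/4"
    and out: "x < l' \<or> x > r'"
  shows "a*x+b \<ge> -(x\<^sup>2/2) + \<delta>\<^sup>2/4"
proof -
  define p where "p = -a"
  define m where "m = b - a\<^sup>2/2"
  have phi: "\<And>y. a*y+b+y\<^sup>2/2 = (y-p)\<^sup>2/2 + m" unfolding p_def m_def by (simp add: power2_eq_square algebra_simps)
  consider "p < l'" | "p > r'" | "l' \<le> p \<and> p \<le> r'" by linarith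
  then show ?thesis
  proof cases
    case 1
    have "a*l'+b \<ge> -(l'\<^sup>2/2) - \<delta>\<^sup>2/4" using dom x0 d by auto
    hence A: "(l'-p)\<^sup>2/2 + m \<ge> - \<delta>\<^sup>2/4" using phi[of l'] by linarith
    have B: "(x0-p)\<^sup>2/2 + m \<le> \<delta>\<^sup>2/4" using phi[of x0] at by linarith
    have "(x0-p)\<^sup>2 \<ge> (l'-p)\<^sup>2 + 9*\<delta>\<^sup>2"
    proof -
      have "x0 - p \<ge> (l'-p) + 3*\<delta>" using x0 by linarith
      hence "(x0-p)\<^sup>2 \<ge> ((l'-p) + 3*\<delta>)\<^sup>2" using 1 d by (intro power_mono) auto
      also have "((l'-p) + 3*\<delta>)\<^sup>2 \<ge> (l'-p)\<^sup>2 + 9*\<delta>\<^sup>2" using 1 d by (simp add: power2_eq_square algebra_simps)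
      finally show ?thesis .
    qed
    moreover have "\<delta>\<^sup>2 > 0" using d by simp
    ultimately have False using A B by linarith
    then show ?thesis ..
  next
    case 2
    have "a*r'+b \<ge> -(r'\<^sup>2/2) - \<delta>\<^sup>2/4" using dom x0 d by auto
    hence A: "(r'-p)\<^sup>2/2 + m \<ge> - \<delta>\<^sup>2/4" using phi[of r'] by linarith
    have B: "(x0-p)\<^sup>2/2 + m \<le> \<delta>\<^sup>2/4" using phi[of x0] at by linarith
    have "(x0-p)\<^sup>2 \<ge> (r'-p)\<^sup>2 + 9*\<delta>\<^sup>2"
    proof -
      have "p - x0 \<ge> (p-r') + 3*\<delta>" using x0 by linarith
      hence "(p-x0)\<^sup>2 \<ge> ((p-r') + 3*\<delta>)\<^sup>2" using 2 d by (intro power_mono) auto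
      also have "((p-r') + 3*\<delta>)\<^sup>2 \<ge> (p-r')\<^sup>2 + 9*\<delta>\<^sup>2" using 2 d by (simp add: power2_eq_square algebra_simps)
      finally show ?thesis by (simp add: power2_commute)
    qed
    moreover have "\<delta>\<^sup>2 > 0" using d by simp
    ultimately have False using A B by linarith
    then show ?thesis ..
  next
    case 3
    have "a*p+b \<ge> -(p\<^sup>2/2) - \<delta>\<^sup>2/4" using dom 3 by auto
    hence A: "m \<ge> - \<delta>\<^sup>2/4" using phi[of p] by simp
    have B: "(x0-p)\<^sup>2/2 + m \<le> \<delta>\<^sup>2/4" using phi[of x0] at by linarith
    have "(x0-p)\<^sup>2 \<le> \<delta>\<^sup>2" using A B by linarith
    hence "\<bar>x0-p\<bar> \<le> \<delta>" using d by (metis abs_of_pos power2_le_imp_le power2_abs abs_ge_zero)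
    hence "\<bar>x-p\<bar> \<ge> 2*\<delta>" using out x0 by auto
    hence "(2*\<delta>)\<^sup>2 \<le> \<bar>x-p\<bar>\<^sup>2" using d by (intro power_mono) auto
    hence C: "(x-p)\<^sup>2 \<ge> 4*\<delta>\<^sup>2" by (simp add: power_mult_distrib)
    have "a*x+b+x\<^sup>2/2 \<ge> \<delta>\<^sup>2/4" using phi[of x] A C zero_le_power2[of \<delta>] by linarith
    then show ?thesis by linarith
  qed
qed

theorem mainTheorem16:
  fixes \<delta> l l' r' r :: real and g :: "real \<Rightarrow> real"
  assumes "\<delta> > 0"
    and "l < l'" and "l' < r'" and "r' < r"
    and "\<forall>x\<in>{l..r}. \<bar>g x + x\<^sup>2 / 2\<bar> \<le> \<delta>\<^sup>2 / 4"
  shows "\<forall>x\<in>{l' + 3 * \<delta> .. r' - 3 * \<delta>}.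
           concave_majorant g {l..r} x = concave_majorant g {l'..r'} x"
proof
  fix x0 assume x0: "x0 \<in> {l' + 3 * \<delta> .. r' - 3 * \<delta>}"
  define S1 where "S1 = {a * x0 + b | a b. \<forall>x\<in>{l..r}. a * x + b \<ge> g x}"
  define S2 where "S2 = {a * x0 + b | a b. \<forall>x\<in>{l'..r'}. a * x + b \<ge> g x}"
  have gb: "\<And>x. x \<in> {l..r} \<Longrightarrow> g x \<le> -(x\<^sup>2/2) + \<delta>\<^sup>2/4 \<and> g x \<ge> -(x\<^sup>2/2) - \<delta>\<^sup>2/4"
  proof -
    fix x assume "x \<in> {l..r}"
    hence "\<bar>g x + x\<^sup>2 / 2\<bar> \<le> \<delta>\<^sup>2 / 4" using assms(5) by blast
    thus "g x \<le> -(x\<^sup>2/2) + \<delta>\<^sup>2/4 \<and> g x \<ge> -(x\<^sup>2/2) - \<delta>\<^sup>2/4" by linarith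
  qed
  have x0in: "x0 \<in> {l'..r'}" using x0 assms(1) by auto
  have sub: "S1 \<subseteq> S2"
  proof
    fix v assume "v \<in> S1"
    then obtain a b where v: "v = a * x0 + b" and d1: "\<forall>x\<in>{l..r}. a * x + b \<ge> g x"
      unfolding S1_def by blast
    have "\<forall>x\<in>{l'..r'}. a * x + b \<ge> g x"
    proof
      fix x assume "x \<in> {l'..r'}"
      hence "x \<in> {l..r}" using assms(2,4) by auto
      thus "a * x + b \<ge> g x" using d1 by blast
    qed
    thus "v \<in> S2" unfolding S2_def v by blast
  qed
  have T: "-(x0\<^sup>2/2) + \<delta>\<^sup>2/4 \<in> S1"
  proof -
    have "\<forall>x\<in>{l..r}. (-x0) * x + (x0\<^sup>2/2 + \<delta>\<^sup>2/4) \<ge> g x"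
    proof
      fix x assume "x \<in> {l..r}"
      hence "g x \<le> -(x\<^sup>2/2) + \<delta>\<^sup>2/4" using gb by blast
      moreover have "-(x\<^sup>2/2) \<le> (-x0) * x + x0\<^sup>2/2"
        using zero_le_power2[of "x - x0"] by (simp add: power2_eq_square algebra_simps)
      ultimately show "(-x0) * x + (x0\<^sup>2/2 + \<delta>\<^sup>2/4) \<ge> g x" by linarith
    qed
    moreover have "(-x0) * x0 + (x0\<^sup>2/2 + \<delta>\<^sup>2/4) = -(x0\<^sup>2/2) + \<delta>\<^sup>2/4"
      by (simp add: power2_eq_square)
    ultimately show ?thesis unfolding S1_def
      by (intro CollectI exI[of _ "-x0"] exI[of _ "x0\<^sup>2/2 + \<delta>\<^sup>2/4"] conjI) auto
  qed
  have bdd2: "bdd_below S2"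
    unfolding bdd_below_def
  proof (intro exI ballI)
    fix v assume "v \<in> S2"
    then obtain a b where v: "v = a * x0 + b" and d1: "\<forall>x\<in>{l'..r'}. a * x + b \<ge> g x"
      unfolding S2_def by blast
    show "g x0 \<le> v" using d1 x0in v by blast
  qed
  have bdd1: "bdd_below S1" using bdd_below_mono[OF bdd2 sub] .
  have ne1: "S1 \<noteq> {}" using T by auto
  have le1: "Inf S2 \<le> Inf S1" using cInf_superset_mono[OF ne1 bdd2 sub] .
  have le2: "Inf S1 \<le> Inf S2"
  proof (rule cInf_greatest)
    show "S2 \<noteq> {}" using ne1 sub by auto
  next
    fix v assume "v \<in> S2"
    then obtain a b where v: "v = a * x0 + b" and dom: "\<forall>x\<in>{l'..r'}. a * x + b \<ge> g x"
      unfolding S2_def by auto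
    show "Inf S1 \<le> v"
    proof (cases "a*x0+b+x0\<^sup>2/2 \<le> \<delta>\<^sup>2/4")
      case True
      have dom': "\<forall>y\<in>{l'..r'}. a*y+b \<ge> -(y\<^sup>2/2) - \<delta>\<^sup>2/4"
      proof
        fix y assume y: "y \<in> {l'..r'}"
        hence "y \<in> {l..r}" using assms by auto
        thus "a*y+b \<ge> -(y\<^sup>2/2) - \<delta>\<^sup>2/4" using gb[of y] dom y by (meson order_trans)
      qed
      have "\<forall>x\<in>{l..r}. a * x + b \<ge> g x"
      proof
        fix x assume xr: "x \<in> {l..r}"
        show "a * x + b \<ge> g x"
        proof (cases "x \<in> {l'..r'}")
          case True thus ?thesis using dom by blast
        next
          case False
          hence "x < l' \<or> x > r'" by auto
          from key[OF assms(1) _ _ dom' \<open>a*x0+b+x0\<^sup>2/2 \<le> \<delta>\<^sup>2/4\<close> this] x0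
          have "a*x+b \<ge> -(x\<^sup>2/2) + \<delta>\<^sup>2/4" by auto
          thus ?thesis using gb[OF xr] by linarith
        qed
      qed
      hence "v \<in> S1" unfolding S1_def v by blast
      thus ?thesis using bdd1 by (rule cInf_lower)
    next
      case False
      have "Inf S1 \<le> -(x0\<^sup>2/2) + \<delta>\<^sup>2/4" using T bdd1 by (rule cInf_lower)
      thus ?thesis using False v by linarith
    qed
  qed
  show "concave_majorant g {l..r} x0 = concave_majorant g {l'..r'} x0"
    unfolding concave_majorant_def S1_def[symmetric] S2_def[symmetric] using le1 le2 by linarith
qed

end
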